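(* For each integer $r\ge2$, $$\lim_{\substack{n\in D_r\\ n\to\infty}}\frac{\mathrm{IR}(X_n)}{\alpha(X_n)}=1.$$
   Context: $D_r=\{x\in\mathbb N:\ d\mid x \text{ for some } d\in\{2,3,\dots,r\}\}$. $X_n$ is the graph on $\{0,\dots,n-1\}$ with $a,b$ adjacent iff $\gcd(a-b,n)=1$. $\alpha(G)$ is the independence number; $\mathrm{IR}(G)$ is the maximum size of an irredundant set, where $S$ is irredundant if every $v\in S$ has a vertex in $N[v]\setminus N[S\setminus\{v\}]$ (closed neighborhoods). *)

theory Defs
  imports Complex_Main
begin

definition D :: "nat \<Rightarrow> nat set" where
  "D r = {x. \<exists>d\<in>{2..r}. d dvd x}"

definition Xadj :: "nat \<Rightarrow> nat \<Rightarrow> nat \<Rightarrow> bool" where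
  "Xadj n a b \<longleftrightarrow> gcd (int a - int b) (int n) = 1"

definition Xverts :: "nat \<Rightarrow> nat set" where
  "Xverts n = {0..<n}"

definition cnbhd :: "nat \<Rightarrow> nat \<Rightarrow> nat set" where
  "cnbhd n v = {u \<in> Xverts n. u = v \<or> Xadj n u v}"

definition cnbhd_set :: "nat \<Rightarrow> nat set \<Rightarrow> nat set" where
  "cnbhd_set n S = (\<Union>v\<in>S. cnbhd n v)"

definition independent :: "nat \<Rightarrow> nat set \<Rightarrow> bool" where
  "independent n S \<longleftrightarrow> S \<subseteq> Xverts n \<and> (\<forall>a\<in>S. \<forall>b\<in>S. a \<noteq> b \<longrightarrow> \<not> Xadj n a b)"

definition irredundant :: "nat \<Rightarrow> nat set \<Rightarrow> bool" where
  "irredundant n S \<longleftrightarrow> S \<subseteq> Xverts n \<and>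
     (\<forall>v\<in>S. cnbhd n v - cnbhd_set n (S - {v}) \<noteq> {})"

definition alpha :: "nat \<Rightarrow> nat" where
  "alpha n = Max (card ` {S. independent n S})"

definition IR :: "nat \<Rightarrow> nat" where
  "IR n = Max (card ` {S. irredundant n S})"

end

theory Submission imports Defs "HOL-Computational_Algebra.Primes" begin


lemma coloring_bound:
  fixes P :: "nat set" and B :: "nat set" and u :: "nat \<Rightarrow> nat"
  assumes fP: "finite P" and fB: "finite B" and pos: "\<forall>q\<in>P. q > 0"
    and diff: "\<And>i q. i \<in> B \<Longrightarrow> q \<in> P \<Longrightarrow> i mod q \<noteq> u i mod q"
    and cross: "\<And>i j. i \<in> B \<Longrightarrow> j \<in> B \<Longrightarrow> i \<noteq> j \<Longrightarrow> \<exists>q\<in>P. j mod q = u i mod q"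
  shows "card B \<le> 4 ^ card P"
proof (cases "B = {}")
  case True then show ?thesis by simp
next
  case False
  define X where "X = Sigma P (\<lambda>q. {..<q})"
  define Z where "Z i = (\<lambda>q. (q, u i mod q)) ` P" for i
  define Y where "Y i = (\<lambda>q. (q, i mod q)) ` P \<union> Z i" for i
  define E where "E i = {C. C \<subseteq> X \<and> C \<inter> Y i = Z i}" for i
  have fX: "finite X" unfolding X_def using fP by auto
  have YX: "Y i \<subseteq> X" for i using pos unfolding Y_def Z_def X_def by auto
  have ZY: "Z i \<subseteq> Y i" for i unfolding Y_def by auto
  have cardY: "card (Y i) = 2 * card P" if "i \<in> B" for i
  proof -
    have d: "(\<lambda>q. (q, i mod q)) ` P \<inter> Z i = {}"
      using diff[OF that] unfolding Z_def by auto
    have c1: "card ((\<lambda>q. (q, i mod q)) ` P) = card P"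
      by (rule card_image) (auto simp: inj_on_def)
    have c2: "card (Z i) = card P" unfolding Z_def
      by (rule card_image) (auto simp: inj_on_def)
    show ?thesis unfolding Y_def
      using card_Un_disjoint[OF _ _ d] fP c1 c2 unfolding Z_def by auto
  qed
  have cardE: "card (E i) = 2 ^ (card X - card (Y i))" for i
  proof -
    have "bij_betw (\<lambda>C. C - Y i) (E i) (Pow (X - Y i))"
      unfolding bij_betw_def
    proof
      show "inj_on (\<lambda>C. C - Y i) (E i)"
        unfolding inj_on_def E_def by blast
      show "(\<lambda>C. C - Y i) ` E i = Pow (X - Y i)"
      proof
        show "(\<lambda>C. C - Y i) ` E i \<subseteq> Pow (X - Y i)" unfolding E_def by blast
        show "Pow (X - Y i) \<subseteq> (\<lambda>C. C - Y i) ` E i"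
        proof
          fix D assume D: "D \<in> Pow (X - Y i)"
          have "D \<union> Z i \<in> E i" using D ZY YX unfolding E_def by blast
          moreover have "D = (D \<union> Z i) - Y i" using D ZY by blast
          ultimately show "D \<in> (\<lambda>C. C - Y i) ` E i" by blast
        qed
      qed
    qed
    then have "card (E i) = card (Pow (X - Y i))" by (rule bij_betw_same_card)
    also have "\<dots> = 2 ^ card (X - Y i)" using fX by (simp add: card_Pow)
    also have "card (X - Y i) = card X - card (Y i)"
      by (rule card_Diff_subset[OF finite_subset[OF YX fX] YX])
    finally show ?thesis .
  qed
  have fE: "finite (E i)" for i
    by (rule finite_subset[of _ "Pow X"]) (use fX in \<open>auto simp: E_def\<close>)
  have disj: "E i \<inter> E j = {}" if ij: "i \<in> B" "j \<in> B" "i \<noteq> j" for i j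
  proof -
    obtain q where q: "q \<in> P" "j mod q = u i mod q" using cross[OF ij] by blast
    show ?thesis
    proof (rule ccontr)
      assume "E i \<inter> E j \<noteq> {}"
      then obtain C where C: "C \<in> E i" "C \<in> E j" by blast
      have "(q, u i mod q) \<in> C" using C(1) q unfolding E_def Y_def Z_def by blast
      moreover have "(q, j mod q) \<notin> C" using C(2) q diff[OF ij(2) q(1)]
        unfolding E_def Y_def Z_def by blast
      ultimately show False using q by simp
    qed
  qed
  have "(\<Sum>i\<in>B. card (E i)) = card (\<Union>i\<in>B. E i)"
    by (rule card_UN_disjoint[symmetric]) (use fB fE disj in auto)
  also have "\<dots> \<le> card (Pow X)"
    by (rule card_mono) (use fX in \<open>auto simp: E_def\<close>)
  also have "\<dots> = 2 ^ card X" using fX by (simp add: card_Pow)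
  finally have s: "(\<Sum>i\<in>B. card (E i)) \<le> 2 ^ card X" .
  obtain i0 where i0: "i0 \<in> B" using False by blast
  have le: "2 * card P \<le> card X" using cardY[OF i0] card_mono[OF fX YX[of i0]] by simp
  have "(\<Sum>i\<in>B. card (E i)) = card B * 2 ^ (card X - 2 * card P)"
    using cardE cardY by simp
  with s have "card B * 2 ^ (card X - 2 * card P) \<le> 2 ^ (card X - 2 * card P) * 2 ^ (2 * card P)"
    using le by (simp add: power_add[symmetric])
  then have "card B \<le> 2 ^ (2 * card P)" by simp
  then show ?thesis by (simp add: power_mult)
qed



lemma fin_irr: "finite {S. irredundant n S}"
  by (rule finite_subset[of _ "Pow (Xverts n)"]) (auto simp: irredundant_def Xverts_def)

lemma fin_ind: "finite {S. independent n S}"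
  by (rule finite_subset[of _ "Pow (Xverts n)"]) (auto simp: independent_def Xverts_def)

lemma ind_irr: assumes "independent n S" shows "irredundant n S"
  unfolding irredundant_def
proof
  show "S \<subseteq> Xverts n" using assms by (simp add: independent_def)
  show "\<forall>v\<in>S. cnbhd n v - cnbhd_set n (S - {v}) \<noteq> {}"
  proof
    fix v assume v: "v \<in> S"
    have "v \<in> cnbhd n v" using v assms by (auto simp: cnbhd_def independent_def)
    moreover have "v \<notin> cnbhd_set n (S - {v})"
      using v assms by (auto simp: cnbhd_def cnbhd_set_def independent_def)
    ultimately show "cnbhd n v - cnbhd_set n (S - {v}) \<noteq> {}" by blast
  qed
qed

lemma IR_ge_alpha: "alpha n \<le> IR n"
proof -
  have "{} \<in> {S. independent n S}" by (simp add: independent_def)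
  then obtain S where S: "independent n S" "alpha n = card S"
    unfolding alpha_def using Max_in[of "card ` {S. independent n S}"] fin_ind by fastforce
  have "card S \<in> card ` {S. irredundant n S}" using ind_irr[OF S(1)] by blast
  then show ?thesis unfolding IR_def using S(2) fin_irr by simp
qed

lemma alpha_ge: assumes "d \<ge> 2" "d dvd n" shows "n div d \<le> alpha n"
proof -
  define S where "S = (\<lambda>j. d * j) ` {..<n div d}"
  have cS: "card S = n div d" unfolding S_def
    by (rule trans[OF card_image]) (use assms in \<open>auto simp: inj_on_def\<close>)
  have "independent n S" unfolding independent_def
  proof
    show "S \<subseteq> Xverts n" unfolding S_def Xverts_def
    proof
      fix x assume "x \<in> (\<lambda>j. d * j) ` {..<n div d}"
      then obtain j where j: "j < n div d" "x = d * j" by blast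
      have "d * j < d * (n div d)" using j assms by (intro mult_strict_left_mono) auto
      also have "\<dots> = n" using assms by simp
      finally show "x \<in> {0..<n}" using j by simp
    qed
    show "\<forall>a\<in>S. \<forall>b\<in>S. a \<noteq> b \<longrightarrow> \<not> Xadj n a b"
    proof (intro ballI impI)
      fix a b assume ab: "a \<in> S" "b \<in> S" "a \<noteq> b"
      then obtain i j where a: "a = d * i" and b: "b = d * j" unfolding S_def by blast
      have "int d dvd int a - int b" using a b by (simp add: right_diff_distrib[symmetric])
      moreover have "int d dvd int n" using assms by simp
      ultimately have "int d dvd gcd (int a - int b) (int n)" by simp
      then show "\<not> Xadj n a b" unfolding Xadj_def
      proof (intro notI)
        assume "int d dvd gcd (int a - int b) (int n)" "gcd (int a - int b) (int n) = 1"
        then have "int d dvd 1" by simp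
        then show False using assms by simp
      qed
    qed
  qed
  then have "card S \<in> card ` {S. independent n S}" by blast
  then show ?thesis unfolding alpha_def using cS fin_ind by simp
qed



lemma IR_le: assumes n2: "n \<ge> 2" shows "IR n \<le> alpha n + 4 ^ card (prime_factors n)"
proof -
  have "{} \<in> {S. irredundant n S}" by (simp add: irredundant_def)
  then obtain S where S: "irredundant n S" "IR n = card S"
    unfolding IR_def using Max_in[of "card ` {S. irredundant n S}"] fin_irr by fastforce
  have SX: "S \<subseteq> Xverts n" using S(1) by (simp add: irredundant_def)
  have fS: "finite S" using SX by (rule finite_subset) (simp add: Xverts_def)
  define A where "A = {v\<in>S. v \<in> cnbhd n v - cnbhd_set n (S - {v})}"
  define B where "B = S - A"
  have indA: "independent n A" unfolding independent_def
  proof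
    show "A \<subseteq> Xverts n" using SX A_def by auto
    show "\<forall>a\<in>A. \<forall>b\<in>A. a \<noteq> b \<longrightarrow> \<not> Xadj n a b"
    proof (intro ballI impI notI)
      fix a b assume ab: "a \<in> A" "b \<in> A" "a \<noteq> b" and adj: "Xadj n a b"
      have "a \<in> cnbhd n b" using ab adj SX unfolding A_def cnbhd_def by auto
      then have "a \<in> cnbhd_set n (S - {a})" using ab unfolding A_def cnbhd_set_def by auto
      then show False using ab(1) unfolding A_def by auto
    qed
  qed
  have cA: "card A \<le> alpha n"
    unfolding alpha_def using indA fin_ind by (auto intro!: Max_ge)
  have "\<forall>v\<in>B. \<exists>x. x \<in> cnbhd n v - cnbhd_set n (S - {v}) \<and> x \<noteq> v"
  proof
    fix v assume v: "v \<in> B"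
    then have "cnbhd n v - cnbhd_set n (S - {v}) \<noteq> {}" using S(1) unfolding B_def irredundant_def by auto
    then obtain x where x: "x \<in> cnbhd n v - cnbhd_set n (S - {v})" by blast
    have "x \<noteq> v" using x v unfolding B_def A_def by auto
    then show "\<exists>x. x \<in> cnbhd n v - cnbhd_set n (S - {v}) \<and> x \<noteq> v" using x by blast
  qed
  then obtain u where u: "\<And>v. v \<in> B \<Longrightarrow> u v \<in> cnbhd n v - cnbhd_set n (S - {v}) \<and> u v \<noteq> v"
    by metis
  have n0: "n \<noteq> 0" using n2 by simp
  have cB: "card B \<le> 4 ^ card (prime_factors n)"
  proof (rule coloring_bound[where u = u])
    show "finite (prime_factors n)" by simp
    show "finite B" using fS B_def by simp
    show "\<forall>q\<in>prime_factors n. q > 0" by (auto simp: in_prime_factors_iff prime_gt_0_nat)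
    show "i mod q \<noteq> u i mod q" if i: "i \<in> B" and q: "q \<in> prime_factors n" for i q
    proof
      assume eq: "i mod q = u i mod q"
      have "Xadj n (u i) i" using u[OF i] unfolding cnbhd_def by auto
      then have g: "gcd (int (u i) - int i) (int n) = 1" by (simp add: Xadj_def)
      have "int (u i) mod int q = int i mod int q" using eq by (metis of_nat_mod)
      then have "int q dvd int (u i) - int i" by (simp add: mod_eq_dvd_iff)
      moreover have "int q dvd int n" using q by (simp add: in_prime_factors_iff)
      ultimately have "int q dvd 1" using g by (metis gcd_greatest)
      then show False using q by (auto simp: in_prime_factors_iff)
    qed
    show "\<exists>q\<in>prime_factors n. j mod q = u i mod q"
      if i: "i \<in> B" and j: "j \<in> B" and ij: "i \<noteq> j" for i j
    proof -
      have ui: "u i \<in> Xverts n" "u i \<notin> cnbhd_set n (S - {i})" using u[OF i] unfolding cnbhd_def by auto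
      have "j \<in> S - {i}" using j ij B_def by auto
      then have "u i \<notin> cnbhd n j" using ui(2) unfolding cnbhd_set_def by auto
      then have "\<not> Xadj n (u i) j" using ui(1) unfolding cnbhd_def by auto
      then have g: "gcd (int (u i) - int j) (int n) \<noteq> 1" by (simp add: Xadj_def)
      define g' where "g' = gcd (int (u i) - int j) (int n)"
      have "g' \<noteq> 0" using n0 g'_def by simp
      moreover have "g' \<ge> 0" using g'_def by simp
      ultimately have "nat g' \<noteq> 1" using g g'_def by auto
      then obtain q where q: "prime q" "q dvd nat g'" using prime_factor_nat by blast
      have "int q dvd int (nat g')" using q(2) by (simp only: of_nat_dvd_iff)
      then have "int q dvd g'" using \<open>g' \<ge> 0\<close> by simp
      then have d1: "int q dvd int (u i) - int j" and d2: "int q dvd int n"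
        unfolding g'_def by (meson dvd_trans gcd_dvd1 gcd_dvd2)+
      have qP: "q \<in> prime_factors n" using d2 q(1) n0 by (simp add: in_prime_factors_iff)
      have "int (u i) mod int q = int j mod int q" using d1 by (simp add: mod_eq_dvd_iff)
      then have "u i mod q = j mod q" by (metis of_nat_eq_iff of_nat_mod)
      then show ?thesis using qP by (metis (mono_tags))
    qed
  qed
  have "card S = card A + card B"
  proof -
    have "A \<subseteq> S" "finite A" using fS A_def by auto
    then show ?thesis unfolding B_def using card_Diff_subset[of A S] card_mono[OF fS] by simp
  qed
  then show ?thesis using S(2) cA cB by simp
qed

lemma pf_bound: assumes n0: "n > 0" shows "16 ^ card (prime_factors n) \<le> (16::nat) ^ 16 * n"
proof -
  define P where "P = prime_factors n"
  define Pb where "Pb = {q\<in>P. q \<ge> 16}"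
  define Ps where "Ps = {q\<in>P. q < 16}"
  have fP: "finite P" unfolding P_def by simp
  have split: "P = Pb \<union> Ps" "Pb \<inter> Ps = {}" unfolding Pb_def Ps_def by auto
  have cP: "card P = card Pb + card Ps"
    using split fP by (metis card_Un_disjoint finite_Un)
  have cPs: "card Ps \<le> 16"
    using card_mono[of "{..<16::nat}" Ps] unfolding Ps_def by auto
  have mult: "multiplicity q n \<ge> 1" if "q \<in> P" for q
    using that n0 unfolding P_def by (simp add: prime_factors_multiplicity)
  have "16 ^ card Pb = (\<Prod>q\<in>Pb. (16::nat))" by simp
  also have "\<dots> \<le> (\<Prod>q\<in>Pb. q ^ multiplicity q n)"
  proof (rule prod_mono)
    fix q assume q: "q \<in> Pb"
    have "16 \<le> q" using q Pb_def by auto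
    also have "q = q ^ 1" by simp
    also have "\<dots> \<le> q ^ multiplicity q n"
      using mult[of q] q Pb_def by (intro power_increasing) auto
    finally show "0 \<le> (16::nat) \<and> 16 \<le> q ^ multiplicity q n" by simp
  qed
  also have "\<dots> \<le> (\<Prod>q\<in>P. q ^ multiplicity q n)"
  proof (rule dvd_imp_le)
    show "(\<Prod>q\<in>Pb. q ^ multiplicity q n) dvd (\<Prod>q\<in>P. q ^ multiplicity q n)"
      using fP Pb_def by (intro prod_dvd_prod_subset) auto
    show "0 < (\<Prod>q\<in>P. q ^ multiplicity q n)"
      using fP P_def by (auto intro!: prod_pos simp: in_prime_factors_iff prime_gt_0_nat)
  qed
  also have "\<dots> = n" using prime_factorization_nat[OF n0] P_def by simp
  finally have b: "16 ^ card Pb \<le> n" .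
  have "(16::nat) ^ card P = 16 ^ card Ps * 16 ^ card Pb" using cP by (simp add: power_add)
  also have "\<dots> \<le> 16 ^ 16 * n"
    using cPs b by (intro mult_mono power_increasing) auto
  finally show ?thesis unfolding P_def .
qed



lemma sq4: "((4::real) ^ k) ^ 2 = 16 ^ k"
proof -
  have "((4::real) ^ k) ^ 2 = (4 ^ 2) ^ k" by (simp only: power_mult[symmetric] mult.commute)
  then show ?thesis by simp
qed

lemma ratio_bounds:
  assumes r2: "r \<ge> 2" and nD: "n \<in> D r" and n2: "n \<ge> 2"
  shows "1 \<le> real (IR n) / real (alpha n)"
    and "real (IR n) / real (alpha n) \<le> 1 + 4^16 * real r / sqrt (real n)"
proof -
  obtain d where d: "d \<in> {2..r}" "d dvd n" using nD unfolding D_def by blast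
  have al: "n div d \<le> alpha n" using alpha_ge[of d n] d by auto
  have nd: "real (n div d) = real n / real d" using d by (simp add: real_of_nat_div)
  have "real n / real r \<le> real n / real d" using d by (intro divide_left_mono) auto
  also have "\<dots> \<le> real (alpha n)" using al nd by (metis of_nat_le_iff)
  finally have alr: "real n / real r \<le> real (alpha n)" .
  have npos: "real n > 0" using n2 by simp
  have rpos: "real r > 0" using r2 by simp
  have apos: "real (alpha n) > 0" using alr npos rpos
    by (meson divide_pos_pos order_less_le_trans)
  show "1 \<le> real (IR n) / real (alpha n)" using IR_ge_alpha[of n] apos by simp
  define k where "k = card (prime_factors n)"
  define K :: real where "K = 4 ^ 16"
  have "(16::nat) ^ k \<le> 16 ^ 16 * n" using pf_bound[of n] n2 k_def by simp
  then have "real ((16::nat) ^ k) \<le> real (16 ^ 16 * n)" by (simp only: of_nat_le_iff)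
  then have "(16::real) ^ k \<le> 16 ^ 16 * real n" by simp
  then have "((4::real) ^ k)^2 \<le> K^2 * real n" unfolding sq4 K_def sq4 .
  then have "(4::real) ^ k \<le> sqrt (K^2 * real n)" by (rule real_le_rsqrt)
  also have "\<dots> = K * sqrt (real n)" by (simp add: real_sqrt_mult K_def)
  finally have fk: "(4::real) ^ k \<le> K * sqrt (real n)" .
  have "IR n \<le> alpha n + 4 ^ k" using IR_le[OF n2] k_def by simp
  then have "real (IR n) \<le> real (alpha n + 4 ^ k)" by (simp only: of_nat_le_iff)
  then have "real (IR n) \<le> real (alpha n) + 4 ^ k" by simp
  then have "real (IR n) / real (alpha n) \<le> (real (alpha n) + 4 ^ k) / real (alpha n)"
    using apos by (intro divide_right_mono) auto
  also have "\<dots> = 1 + 4 ^ k / real (alpha n)" using apos by (simp add: add_divide_distrib)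
  also have "4 ^ k / real (alpha n) \<le> K * sqrt (real n) / (real n / real r)"
    using fk alr apos npos rpos by (intro frac_le) (auto simp: K_def)
  also have "K * sqrt (real n) / (real n / real r) = K * real r / sqrt (real n)"
  proof -
    have e: "real n = sqrt (real n) * sqrt (real n)" using npos by simp
    have "sqrt (real n) > 0" using npos by simp
    then show ?thesis by (subst (2) e) (simp add: field_simps)
  qed
  finally show "real (IR n) / real (alpha n) \<le> 1 + 4^16 * real r / sqrt (real n)"
    unfolding K_def by simp
qed

theorem corollary5p6:
  fixes r :: nat
  assumes "r \<ge> 2"
  shows "((\<lambda>n. real (IR n) / real (alpha n)) \<longlongrightarrow> 1) (inf at_top (principal (D r)))"
proof (rule tendsto_sandwich[of "\<lambda>n. 1" _ _ "\<lambda>n. 1 + 4^16 * real r / sqrt (real n)"])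
  show "\<forall>\<^sub>F n in inf at_top (principal (D r)). 1 \<le> real (IR n) / real (alpha n)"
    unfolding eventually_inf_principal eventually_at_top_linorder
    using ratio_bounds(1)[OF assms] by blast
  show "\<forall>\<^sub>F n in inf at_top (principal (D r)). real (IR n) / real (alpha n) \<le> 1 + 4^16 * real r / sqrt (real n)"
    unfolding eventually_inf_principal eventually_at_top_linorder
    using ratio_bounds(2)[OF assms] by blast
  show "((\<lambda>n. 1) \<longlongrightarrow> (1::real)) (inf at_top (principal (D r)))" by simp
  have "filterlim (\<lambda>n. sqrt (real n)) at_top (at_top :: nat filter)"
    by (rule filterlim_compose[OF sqrt_at_top filterlim_real_sequentially])
  then have "((\<lambda>n. 4^16 * real r / sqrt (real n)) \<longlongrightarrow> (0::real)) at_top"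
    by (intro tendsto_divide_0[OF tendsto_const] filterlim_at_top_imp_at_infinity)
  then have "((\<lambda>n. 1 + 4^16 * real r / sqrt (real n)) \<longlongrightarrow> (1 + 0::real)) at_top"
    by (intro tendsto_add tendsto_const)
  then have "((\<lambda>n. 1 + 4^16 * real r / sqrt (real n)) \<longlongrightarrow> (1::real)) at_top" by simp
  then show "((\<lambda>n. 1 + 4^16 * real r / sqrt (real n)) \<longlongrightarrow> (1::real)) (inf at_top (principal (D r)))"
    by (rule tendsto_mono[rotated]) simp
qed

end
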